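(* Let $f:M\to M$ be a partially hyperbolic endomorphism of a closed manifold $M$. Then the dimensions of $E^s_f(x_0)$, $E^c_f(x_0)$ and $E^u_f(x_0)$ are constant, independent of $\bar x=(x_n)\in M^f$.
   Context: A $C^1$ local diffeomorphism $f:M\to M$ is a partially hyperbolic endomorphism if there are a Riemannian metric and constants $0<\nu<\gamma_1\le\gamma_2<\mu$, $\nu<1<\mu$, $C>1$ such that for every orbit $(x_n)_{n\in\mathbb{Z}}$ ($f(x_n)=x_{n+1}$) there is a splitting $T_{x_n}M=E^s_f(x_n)\oplus E^c_f(x_n)\oplus E^u_f(x_n)$, $Df$-invariant along the orbit, with $\|Df^n_{x_i}v^s\|\le C\nu^n\|v^s\|$, $C^{-1}\gamma_1^n\|v^c\|\le\|Df^n_{x_i}v^c\|\le C\gamma_2^n\|v^c\|$, $C^{-1}\mu^n\|v^u\|\le\|Df^n_{x_i}v^u\|$ for all $n\ge0$, $i\in\mathbb{Z}$, $v^\ast\in E^\ast_f(x_i)$. $M^f=\{(x_n)_{n\in\mathbb{Z}}:f(x_n)=x_{n+1}\}$ is the set of all orbits. *)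

theory Defs
  imports "HOL-Analysis.Analysis"
begin

text \<open>Closed manifolds are modelled as compact, connected C^1 embedded submanifolds
  (without boundary) of a Euclidean space (Whitney embedding).\<close>

definition C1_on :: "('a::euclidean_space \<Rightarrow> 'b::euclidean_space) \<Rightarrow> 'a set \<Rightarrow> bool" where
  "C1_on f S \<longleftrightarrow> (\<exists>f'. (\<forall>x\<in>S. (f has_derivative blinfun_apply (f' x)) (at x))
                        \<and> continuous_on S f')"

definition C1_submanifold :: "'a::euclidean_space set \<Rightarrow> nat \<Rightarrow> bool" where
  "C1_submanifold M d \<longleftrightarrow>
     (\<forall>x\<in>M. \<exists>U V (\<phi>::'a \<Rightarrow> 'a) \<psi> L. open U \<and> x \<in> U \<and> open V \<and> subspace L \<and> dim L = d
        \<and> \<phi> ` U = V \<and> (\<forall>y\<in>U. \<psi> (\<phi> y) = y) \<and> (\<forall>z\<in>V. \<phi> (\<psi> z) = z)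
        \<and> C1_on \<phi> U \<and> C1_on \<psi> V \<and> \<phi> ` (M \<inter> U) = V \<inter> L)"

definition closed_manifold :: "'a::euclidean_space set \<Rightarrow> bool" where
  "closed_manifold M \<longleftrightarrow> compact M \<and> connected M \<and> M \<noteq> {} \<and> (\<exists>d. C1_submanifold M d)"

definition tangent_space :: "'a::euclidean_space set \<Rightarrow> 'a \<Rightarrow> 'a set" where
  "tangent_space M x = {v. \<exists>\<gamma>::real \<Rightarrow> 'a. \<gamma> 0 = x \<and> (\<forall>t. \<gamma> t \<in> M)
                               \<and> (\<gamma> has_vector_derivative v) (at 0)}"

text \<open>F is a C^1 local diffeomorphism of M: F maps M into M, it is C^1 on an open
  neighbourhood W of M with derivative F', and the derivative maps each tangent space
  bijectively onto the tangent space at the image point (inverse function theorem).\<close>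
definition C1_local_diffeo ::
  "'a::euclidean_space set \<Rightarrow> ('a \<Rightarrow> 'a) \<Rightarrow> ('a \<Rightarrow> 'a \<Rightarrow>\<^sub>L 'a) \<Rightarrow> bool" where
  "C1_local_diffeo M F F' \<longleftrightarrow> F ` M \<subseteq> M \<and>
     (\<exists>W. open W \<and> M \<subseteq> W \<and> (\<forall>x\<in>W. (F has_derivative blinfun_apply (F' x)) (at x))
          \<and> continuous_on W F') \<and>
     (\<forall>x\<in>M. inj_on (blinfun_apply (F' x)) (tangent_space M x)
          \<and> blinfun_apply (F' x) ` tangent_space M x = tangent_space M (F x))"

definition riemannian_metric :: "'a::euclidean_space set \<Rightarrow> ('a \<Rightarrow> 'a \<Rightarrow> 'a \<Rightarrow> real) \<Rightarrow> bool" where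
  "riemannian_metric M g \<longleftrightarrow>
     (\<forall>x\<in>M. (\<forall>v w. g x v w = g x w v) \<and> (\<forall>w. linear (\<lambda>v. g x v w))
            \<and> (\<forall>v\<in>tangent_space M x. v \<noteq> 0 \<longrightarrow> g x v v > 0))
     \<and> continuous_on (M \<times> UNIV \<times> UNIV) (\<lambda>(x, v, w). g x v w)"

definition rnorm :: "('a::euclidean_space \<Rightarrow> 'a \<Rightarrow> 'a \<Rightarrow> real) \<Rightarrow> 'a \<Rightarrow> 'a \<Rightarrow> real" where
  "rnorm g x v = sqrt (g x v v)"

definition orbits :: "'a set \<Rightarrow> ('a \<Rightarrow> 'a) \<Rightarrow> (int \<Rightarrow> 'a) set" where
  "orbits M F = {xs. (\<forall>n. xs n \<in> M) \<and> (\<forall>n. F (xs n) = xs (n + 1))}"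

primrec orbit_D :: "('a::euclidean_space \<Rightarrow> 'a \<Rightarrow>\<^sub>L 'a) \<Rightarrow> (int \<Rightarrow> 'a) \<Rightarrow> int \<Rightarrow> nat \<Rightarrow> 'a \<Rightarrow> 'a" where
  "orbit_D F' xs i 0 = (\<lambda>v. v)"
| "orbit_D F' xs i (Suc k) = (\<lambda>v. blinfun_apply (F' (xs (i + int k))) (orbit_D F' xs i k v))"

definition ph_splitting ::
  "'a::euclidean_space set \<Rightarrow> ('a \<Rightarrow> 'a \<Rightarrow>\<^sub>L 'a) \<Rightarrow> ('a \<Rightarrow> 'a \<Rightarrow> 'a \<Rightarrow> real) \<Rightarrow>
   real \<Rightarrow> real \<Rightarrow> real \<Rightarrow> real \<Rightarrow> real \<Rightarrow> (int \<Rightarrow> 'a) \<Rightarrow>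
   (int \<Rightarrow> 'a set) \<Rightarrow> (int \<Rightarrow> 'a set) \<Rightarrow> (int \<Rightarrow> 'a set) \<Rightarrow> bool" where
  "ph_splitting M F' g \<nu> \<gamma>\<^sub>1 \<gamma>\<^sub>2 \<mu> C xs Es Ec Eu \<longleftrightarrow>
     (\<forall>n. subspace (Es n) \<and> subspace (Ec n) \<and> subspace (Eu n)
        \<and> {a + b + c | a b c. a \<in> Es n \<and> b \<in> Ec n \<and> c \<in> Eu n} = tangent_space M (xs n)
        \<and> dim (Es n) + dim (Ec n) + dim (Eu n) = dim (tangent_space M (xs n))
        \<and> blinfun_apply (F' (xs n)) ` Es n = Es (n + 1)
        \<and> blinfun_apply (F' (xs n)) ` Ec n = Ec (n + 1)
        \<and> blinfun_apply (F' (xs n)) ` Eu n = Eu (n + 1))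
   \<and> (\<forall>i k. \<forall>v\<in>Es i. rnorm g (xs (i + int k)) (orbit_D F' xs i k v) \<le> C * \<nu> ^ k * rnorm g (xs i) v)
   \<and> (\<forall>i k. \<forall>v\<in>Ec i. \<gamma>\<^sub>1 ^ k * rnorm g (xs i) v / C \<le> rnorm g (xs (i + int k)) (orbit_D F' xs i k v)
                     \<and> rnorm g (xs (i + int k)) (orbit_D F' xs i k v) \<le> C * \<gamma>\<^sub>2 ^ k * rnorm g (xs i) v)
   \<and> (\<forall>i k. \<forall>v\<in>Eu i. \<mu> ^ k * rnorm g (xs i) v / C \<le> rnorm g (xs (i + int k)) (orbit_D F' xs i k v))"

end

theory Submission
  imports Defs
begin

lemma dim_sum_le:
  fixes S T :: "'a::euclidean_space set"
  assumes "subspace S" "subspace T"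
  shows "dim {x + y |x y. x \<in> S \<and> y \<in> T} \<le> dim S + dim T"
  using dim_sums_Int[OF assms] by linarith

lemma dim_disjoint_le:
  fixes W X T :: "'a::euclidean_space set"
  assumes "subspace W" "subspace X" "subspace T" "W \<subseteq> T" "X \<subseteq> T" "\<And>v. v \<in> W \<Longrightarrow> v \<in> X \<Longrightarrow> v = 0"
  shows "dim W + dim X \<le> dim T"
proof -
  have "W \<inter> X = {0}" using assms subspace_0 by blast
  hence "dim (W \<inter> X) = 0" by simp
  moreover have "dim {x + y |x y. x \<in> W \<and> y \<in> X} \<le> dim T"
    apply (rule dim_subset) using assms by (auto intro: subspace_add)
  ultimately show ?thesis using dim_sums_Int[OF assms(1,2)] by linarith
qed

lemma subspace_sums2:
  fixes S T :: "'a::euclidean_space set"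
  assumes "subspace S" "subspace T"
  shows "subspace {x + y |x y. x \<in> S \<and> y \<in> T}"
  using subspace_sums[OF assms] by (simp add: set_plus_def)

lemma triple_dims:
  fixes Es Ec Eu T :: "'a::euclidean_space set"
  assumes s: "subspace Es" "subspace Ec" "subspace Eu"
    and T: "{a + b + c | a b c. a \<in> Es \<and> b \<in> Ec \<and> c \<in> Eu} = T"
    and d: "dim Es + dim Ec + dim Eu = dim T"
  shows "dim {x + y |x y. x \<in> Ec \<and> y \<in> Eu} = dim Ec + dim Eu"
    and "dim {x + y |x y. x \<in> Es \<and> y \<in> Ec} = dim Es + dim Ec"
proof -
  let ?CU = "{x + y |x y. x \<in> Ec \<and> y \<in> Eu}"
  let ?SC = "{x + y |x y. x \<in> Es \<and> y \<in> Ec}"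
  have e1: "T = {x + y |x y. x \<in> Es \<and> y \<in> ?CU}" unfolding T[symmetric]
    by (auto simp: add.assoc)
  have e2: "T = {x + y |x y. x \<in> ?SC \<and> y \<in> Eu}" unfolding T[symmetric]
    by auto
  have "dim T \<le> dim Es + dim ?CU"
    using dim_sum_le[OF s(1) subspace_sums2[OF s(2,3)]] e1 by simp
  moreover have "dim ?CU \<le> dim Ec + dim Eu" using dim_sum_le[OF s(2,3)] .
  ultimately show "dim ?CU = dim Ec + dim Eu" using d by linarith
  have "dim T \<le> dim ?SC + dim Eu"
    using dim_sum_le[OF subspace_sums2[OF s(1,2)] s(3)] e2 by simp
  moreover have "dim ?SC \<le> dim Es + dim Ec" using dim_sum_le[OF s(1,2)] .
  ultimately show "dim ?SC = dim Es + dim Ec" using d by linarith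
qed

lemma growth_contra:
  fixes a m \<beta> B :: real
  assumes "0 < a" "0 < \<beta>" "\<beta> < m" "\<And>n. m ^ n * a \<le> B * \<beta> ^ n"
  shows False
proof -
  have q: "1 < m / \<beta>" using assms by simp
  obtain n where n: "B / a < (m / \<beta>) ^ n" using real_arch_pow[OF q] by blast
  have "(m / \<beta>) ^ n = m ^ n / \<beta> ^ n" by (simp add: power_divide)
  with n have "B / a * \<beta> ^ n < m ^ n" using assms(2)
    by (simp add: pos_less_divide_eq)
  hence "B * \<beta> ^ n < m ^ n * a" using assms(1)
    by (simp add: field_simps)
  with assms(4)[of n] show False by linarith
qed

locale est =
  fixes T :: "'a::euclidean_space set" and p :: "nat \<Rightarrow> 'a \<Rightarrow> real"
    and C \<nu> \<gamma>1 \<gamma>2 \<mu> :: real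
  assumes T: "subspace T"
    and tri: "\<And>n a b. a \<in> T \<Longrightarrow> b \<in> T \<Longrightarrow> p n (a + b) \<le> p n a + p n b"
    and neg: "\<And>n a. a \<in> T \<Longrightarrow> p n (- a) = p n a"
    and nonneg: "\<And>n a. a \<in> T \<Longrightarrow> 0 \<le> p n a"
    and pos: "\<And>a. a \<in> T \<Longrightarrow> a \<noteq> 0 \<Longrightarrow> 0 < p 0 a"
    and cons: "0 < \<nu>" "\<nu> < \<gamma>1" "\<gamma>1 \<le> \<gamma>2" "\<gamma>2 < \<mu>" "1 < C"
begin

definition good3 where
  "good3 Es Ec Eu \<longleftrightarrow> subspace Es \<and> subspace Ec \<and> subspace Eu \<and> Es \<subseteq> T \<and> Ec \<subseteq> T \<and> Eu \<subseteq> T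
    \<and> (\<forall>v\<in>Es. \<forall>n. p n v \<le> C * \<nu> ^ n * p 0 v)
    \<and> (\<forall>v\<in>Ec. \<forall>n. \<gamma>1 ^ n * p 0 v / C \<le> p n v \<and> p n v \<le> C * \<gamma>2 ^ n * p 0 v)
    \<and> (\<forall>v\<in>Eu. \<forall>n. \<mu> ^ n * p 0 v / C \<le> p n v)"

lemma diff_le: "a \<in> T \<Longrightarrow> b \<in> T \<Longrightarrow> p n (a - b) \<le> p n a + p n b"
  using tri[of a "- b" n] neg[of b n] T by (simp add: subspace_neg)

lemma zero_if: "a \<in> T \<Longrightarrow> \<not> 0 < p 0 a \<Longrightarrow> a = 0"
  using pos by blast

lemma pow_le: "(\<nu>::real) ^ n \<le> \<gamma>2 ^ n"
  using cons by (intro power_mono) auto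

lemma G:
  assumes "w \<in> T" "\<beta> > 0" "\<beta> < m" "\<And>n. p n w \<le> B * \<beta> ^ n" "\<And>n. m ^ n * p 0 w / C \<le> p n w"
  shows "w = 0"
proof (rule zero_if[OF assms(1)])
  show "\<not> 0 < p 0 w"
  proof
    assume h: "0 < p 0 w"
    have "\<And>n. m ^ n * (p 0 w / C) \<le> B * \<beta> ^ n"
      using assms(4,5) by (metis order.trans times_divide_eq_right)
    then show False using growth_contra[of "p 0 w / C" \<beta> m B] h cons assms(2,3) by auto
  qed
qed

lemma boundS: "v \<in> T \<Longrightarrow> p n v \<le> C * \<nu> ^ n * p 0 v \<Longrightarrow> p n v \<le> (C * p 0 v) * \<gamma>2 ^ n"
  using pow_le[of n] cons nonneg[of v 0]
  by (smt (verit, ccfv_SIG) mult.commute mult.left_commute mult_left_mono zero_le_mult_iff)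

lemma L1:
  assumes g: "good3 Es Ec Eu" and w: "w \<in> T" "\<And>n. p n w \<le> C * \<nu> ^ n * p 0 w"
    and b: "b \<in> Ec" and c: "c \<in> Eu" and wbc: "w = b + c"
  shows "w = 0"
proof -
  have bT: "b \<in> T" and cT: "c \<in> T" using g b c unfolding good3_def by auto
  have "c = 0"
  proof (rule G[OF cT, of \<gamma>2 \<mu> "C * p 0 w + C * p 0 b"])
    show "0 < \<gamma>2" "\<gamma>2 < \<mu>" using cons by auto
    fix n
    have "c = w - b" using wbc by simp
    hence "p n c \<le> p n w + p n b" using diff_le[OF w(1) bT] by simp
    also have "\<dots> \<le> (C * p 0 w) * \<gamma>2 ^ n + (C * p 0 b) * \<gamma>2 ^ n"
      using boundS[OF w(1) w(2)[of n]] g b unfolding good3_def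
      by (smt (verit, best) mult.assoc mult.commute)
    finally show "p n c \<le> (C * p 0 w + C * p 0 b) * \<gamma>2 ^ n" by (simp add: algebra_simps)
    show "\<mu> ^ n * p 0 c / C \<le> p n c" using g c unfolding good3_def by auto
  qed
  hence wb: "w = b" using wbc by simp
  show "w = 0"
  proof (rule G[OF w(1), of \<nu> \<gamma>1 "C * p 0 w"])
    show "0 < \<nu>" "\<nu> < \<gamma>1" using cons by auto
    fix n
    show "p n w \<le> C * p 0 w * \<nu> ^ n" using w(2)[of n] by (simp add: algebra_simps)
    show "\<gamma>1 ^ n * p 0 w / C \<le> p n w" using g b wb unfolding good3_def by auto
  qed
qed

lemma G2:
  assumes w: "w \<in> T" "\<And>n. p n w \<le> B * \<gamma>2 ^ n" "\<And>n. \<mu> ^ n * p 0 w / C \<le> p n w"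
  shows "w = 0"
  using G[OF w(1) _ _ w(2) w(3)] cons by auto

lemma sumSC_bound:
  assumes g: "good3 Es Ec Eu" and a: "a \<in> Es" and b: "b \<in> Ec"
  shows "p n (a + b) \<le> (C * p 0 a + C * p 0 b) * \<gamma>2 ^ n"
proof -
  have aT: "a \<in> T" and bT: "b \<in> T" using g a b unfolding good3_def by auto
  have "p n (a + b) \<le> p n a + p n b" using tri[OF aT bT] .
  also have "\<dots> \<le> (C * p 0 a) * \<gamma>2 ^ n + (C * p 0 b) * \<gamma>2 ^ n"
    using boundS[OF aT, of n] g a b unfolding good3_def
    by (smt (verit, best) mult.assoc mult.commute)
  finally show ?thesis by (simp add: algebra_simps)
qed

lemma L4:
  assumes g: "good3 Es Ec Eu" and wT: "w \<in> T" and ws: "\<And>n. p n w \<le> C * \<nu> ^ n * p 0 w"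
    and b: "b \<in> Ec" and c: "c \<in> Eu" and wbc: "w = b + c"
  shows "w = 0"
proof -
  have bT: "b \<in> T" and cT: "c \<in> T" using g b c unfolding good3_def by auto
  have "c = 0"
  proof (rule G2[OF cT, of "C * p 0 w + C * p 0 b"])
    fix n
    have "c = w - b" using wbc by simp
    hence "p n c \<le> p n w + p n b" using diff_le[OF wT bT] by simp
    also have "\<dots> \<le> (C * p 0 w) * \<gamma>2 ^ n + (C * p 0 b) * \<gamma>2 ^ n"
      using boundS[OF wT ws[of n]] g b unfolding good3_def
      by (smt (verit, best) mult.assoc mult.commute)
    finally show "p n c \<le> (C * p 0 w + C * p 0 b) * \<gamma>2 ^ n" by (simp add: algebra_simps)
    show "\<mu> ^ n * p 0 c / C \<le> p n c" using g c unfolding good3_def by auto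
  qed
  hence wb: "w = b" using wbc by simp
  show "w = 0"
  proof (rule G[OF wT, of \<nu> \<gamma>1 "C * p 0 w"])
    show "0 < \<nu>" "\<nu> < \<gamma>1" using cons by auto
    fix n
    show "p n w \<le> C * p 0 w * \<nu> ^ n" using ws[of n] by (simp add: algebra_simps)
    show "\<gamma>1 ^ n * p 0 w / C \<le> p n w" using g b wb unfolding good3_def by auto
  qed
qed

lemma SC_int:
  assumes g: "good3 Es Ec Eu" "v \<in> Es" "v \<in> Ec" shows "v = 0"
  using L1[OF g(1), of v v 0] g unfolding good3_def by (auto simp: subspace_0)

lemma CU_int:
  assumes g: "good3 Es Ec Eu" "v \<in> Ec" "v \<in> Eu" shows "v = 0"
proof -
  have vT: "v \<in> T" using g unfolding good3_def by auto
  show ?thesis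
  proof (rule G2[OF vT, of "C * p 0 v"])
    fix n show "p n v \<le> C * p 0 v * \<gamma>2 ^ n" using g unfolding good3_def by (simp add: algebra_simps)
    show "\<mu> ^ n * p 0 v / C \<le> p n v" using g unfolding good3_def by auto
  qed
qed

definition full3 where
  "full3 Es Ec Eu \<longleftrightarrow> good3 Es Ec Eu \<and> {a + b + c | a b c. a \<in> Es \<and> b \<in> Ec \<and> c \<in> Eu} = T
      \<and> dim Es + dim Ec + dim Eu = dim T"

lemma dims_le:
  assumes f: "full3 Es Ec Eu" and l: "good3 Ls Lc Lu"
  shows "dim Ls \<le> dim Es" "dim Lu \<le> dim Eu" "dim Ls + dim Lc \<le> dim Es + dim Ec"
    "dim Lc + dim Lu \<le> dim Ec + dim Eu"
proof -
  have gE: "good3 Es Ec Eu" using f unfolding full3_def by auto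
  have sE: "subspace Es" "subspace Ec" "subspace Eu" "Es \<subseteq> T" "Ec \<subseteq> T" "Eu \<subseteq> T"
    using gE unfolding good3_def by auto
  have sL: "subspace Ls" "subspace Lc" "subspace Lu" "Ls \<subseteq> T" "Lc \<subseteq> T" "Lu \<subseteq> T"
    using l unfolding good3_def by auto
  have td: "dim {x + y |x y. x \<in> Ec \<and> y \<in> Eu} = dim Ec + dim Eu"
     "dim {x + y |x y. x \<in> Es \<and> y \<in> Ec} = dim Es + dim Ec"
    using triple_dims[OF sE(1-3)] f unfolding full3_def by auto
  have sub: "\<And>A B. A \<subseteq> T \<Longrightarrow> B \<subseteq> T \<Longrightarrow> {x + y |x y. x \<in> A \<and> y \<in> B} \<subseteq> T"
    using T by (auto intro: subspace_add)
  have dT: "dim T = dim Es + dim Ec + dim Eu" using f unfolding full3_def by auto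
  have "dim Ls + dim {x + y |x y. x \<in> Ec \<and> y \<in> Eu} \<le> dim T"
  proof (rule dim_disjoint_le[OF sL(1) subspace_sums2[OF sE(2,3)] T sL(4) sub[OF sE(5,6)]])
    fix v assume "v \<in> Ls" "v \<in> {x + y |x y. x \<in> Ec \<and> y \<in> Eu}"
    then obtain b c where "b \<in> Ec" "c \<in> Eu" "v = b + c" "v \<in> T" "\<And>n. p n v \<le> C * \<nu> ^ n * p 0 v"
      using l sL unfolding good3_def by auto
    then show "v = 0" using L1[OF gE] by blast
  qed
  then show "dim Ls \<le> dim Es" using td dT by linarith
  have "dim Lu + dim {x + y |x y. x \<in> Es \<and> y \<in> Ec} \<le> dim T"
  proof (rule dim_disjoint_le[OF sL(3) subspace_sums2[OF sE(1,2)] T sL(6) sub[OF sE(4,5)]])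
    fix v assume "v \<in> Lu" "v \<in> {x + y |x y. x \<in> Es \<and> y \<in> Ec}"
    then obtain a b where ab: "a \<in> Es" "b \<in> Ec" "v = a + b" and vT: "v \<in> T" and
       lo: "\<And>n. \<mu> ^ n * p 0 v / C \<le> p n v"
      using l sL unfolding good3_def by auto
    show "v = 0" using G2[OF vT _ lo] sumSC_bound[OF gE ab(1,2)] ab(3) by blast
  qed
  then show "dim Lu \<le> dim Eu" using td dT by linarith
  have dSC: "dim {x + y |x y. x \<in> Ls \<and> y \<in> Lc} = dim Ls + dim Lc"
  proof -
    have "Ls \<inter> Lc = {0}" using SC_int[OF l] sL subspace_0 by blast
    then show ?thesis using dim_sums_Int[OF sL(1,2)] by simp
  qed
  have dCU: "dim {x + y |x y. x \<in> Lc \<and> y \<in> Lu} = dim Lc + dim Lu"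
  proof -
    have "Lc \<inter> Lu = {0}" using CU_int[OF l] sL subspace_0 by blast
    then show ?thesis using dim_sums_Int[OF sL(2,3)] by simp
  qed
  have "dim {x + y |x y. x \<in> Ls \<and> y \<in> Lc} + dim Eu \<le> dim T"
  proof (rule dim_disjoint_le[OF subspace_sums2[OF sL(1,2)] sE(3) T sub[OF sL(4,5)] sE(6)])
    fix v assume "v \<in> {x + y |x y. x \<in> Ls \<and> y \<in> Lc}" "v \<in> Eu"
    then obtain a b where ab: "a \<in> Ls" "b \<in> Lc" "v = a + b" and vT: "v \<in> T" and
       lo: "\<And>n. \<mu> ^ n * p 0 v / C \<le> p n v"
      using gE sE unfolding good3_def by auto
    show "v = 0" using G2[OF vT _ lo] sumSC_bound[OF l ab(1,2)] ab(3) by blast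
  qed
  then show "dim Ls + dim Lc \<le> dim Es + dim Ec" using dSC dT by linarith
  have "dim {x + y |x y. x \<in> Lc \<and> y \<in> Lu} + dim Es \<le> dim T"
  proof (rule dim_disjoint_le[OF subspace_sums2[OF sL(2,3)] sE(1) T sub[OF sL(5,6)] sE(4)])
    fix v assume "v \<in> {x + y |x y. x \<in> Lc \<and> y \<in> Lu}" "v \<in> Es"
    then obtain b c where "b \<in> Lc" "c \<in> Lu" "v = b + c" "v \<in> Es" by auto
    then show "v = 0" using L4[OF l, of v b c] gE sE unfolding good3_def by auto
  qed
  then show "dim Lc + dim Lu \<le> dim Ec + dim Eu" using dCU dT by linarith
qed


lemma dims_eq:
  assumes f: "full3 Es Ec Eu" and l: "good3 Ls Lc Lu" and d: "dim Ls + dim Lc + dim Lu = dim T"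
  shows "dim Ls = dim Es" "dim Lc = dim Ec" "dim Lu = dim Eu"
proof -
  note le = dims_le[OF f l]
  have dT: "dim T = dim Es + dim Ec + dim Eu" using f unfolding full3_def by auto
  show "dim Ls = dim Es" "dim Lc = dim Ec" "dim Lu = dim Eu" using le d dT by linarith+
qed

end

lemma tangent_scale:
  assumes "v \<in> tangent_space M x" shows "c *\<^sub>R v \<in> tangent_space M x"
proof -
  obtain \<gamma> where g: "\<gamma> 0 = x" "\<forall>t. \<gamma> t \<in> M" "(\<gamma> has_vector_derivative v) (at 0)"
    using assms unfolding tangent_space_def by auto
  have l: "((\<lambda>t. c * t) has_vector_derivative c) (at 0)"
    by (auto intro!: derivative_eq_intros simp: has_real_derivative_iff_has_vector_derivative[symmetric])
  have "((\<gamma> \<circ> (\<lambda>t. c * t)) has_vector_derivative (c *\<^sub>R v)) (at 0)"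
    using vector_diff_chain_at[OF l] g(3) by simp
  then show ?thesis unfolding tangent_space_def using g by (auto intro!: exI[of _ "\<gamma> \<circ> (\<lambda>t. c * t)"])
qed

lemma deriv_in_subspace:
  fixes c :: "real \<Rightarrow> 'a::euclidean_space"
  assumes L: "subspace L" and r: "r > 0" and inL: "\<And>t. t \<in> ball 0 r \<Longrightarrow> c t \<in> L"
    and D: "(c has_vector_derivative D) (at 0)"
  shows "D \<in> L"
proof -
  obtain y z where y: "y \<in> span L" and z: "\<And>w. w \<in> span L \<Longrightarrow> orthogonal z w" and Dyz: "D = y + z"
    using orthogonal_subspace_decomp_exists by blast
  have spanL: "span L = L" using L by (simp add: span_eq_iff)
  have d1: "((\<lambda>t. z \<bullet> c t) has_derivative (\<lambda>h. z \<bullet> (h *\<^sub>R D))) (at 0)"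
    using D unfolding has_vector_derivative_def
    by (auto intro!: derivative_eq_intros)
  have d2: "((\<lambda>t. 0::real) has_derivative (\<lambda>h. z \<bullet> (h *\<^sub>R D))) (at 0)"
  proof (rule has_derivative_transform_within_open[OF d1, of "ball 0 r"])
    show "open (ball (0::real) r)" by simp
    show "(0::real) \<in> ball 0 r" using r by simp
    fix t :: real assume "t \<in> ball 0 r"
    then have "c t \<in> L" using inL by blast
    then have "c t \<in> span L" by (rule span_base)
    then show "z \<bullet> c t = 0" using z by (simp add: orthogonal_def)
  qed
  have "(\<lambda>h. z \<bullet> (h *\<^sub>R D)) = (\<lambda>h. 0::real)"
    using has_derivative_unique[OF d2 has_derivative_const] .
  then have "z \<bullet> D = 0" by (metis scaleR_one)
  moreover have "z \<bullet> y = 0" using z[OF y] by (simp add: orthogonal_def inner_commute)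
  ultimately have "z \<bullet> z = 0" using Dyz by (simp add: inner_add_right)
  then have "z = 0" by simp
  then show ?thesis using Dyz y spanL by simp
qed

lemma aux2: assumes "0 < (e::real)" "0 \<le> (nw::real)" shows "e / (2 * (nw + 1)) * 2 * nw < e"
proof -
  have "e / (2 * (nw + 1)) * 2 * nw = e * (nw / (nw + 1))" using assms by (simp add: field_simps)
  moreover have "nw / (nw + 1) < 1" using assms by simp
  moreover have "e * (nw / (nw + 1)) < e * 1" using assms calculation(2) by (intro mult_strict_left_mono) auto
  ultimately show ?thesis by simp
qed

locale chart =
  fixes M :: "'a::euclidean_space set" and U V L :: "'a set" and \<phi> \<psi> :: "'a \<Rightarrow> 'a"
    and \<phi>' \<psi>' :: "'a \<Rightarrow> 'a \<Rightarrow>\<^sub>L 'a"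
  assumes oU: "open U" and oV: "open V" and L: "subspace L"
    and img: "\<phi> ` U = V" and inv1: "\<And>y. y \<in> U \<Longrightarrow> \<psi> (\<phi> y) = y" and inv2: "\<And>z. z \<in> V \<Longrightarrow> \<phi> (\<psi> z) = z"
    and d\<phi>: "\<And>y. y \<in> U \<Longrightarrow> (\<phi> has_derivative blinfun_apply (\<phi>' y)) (at y)"
    and d\<psi>: "\<And>z. z \<in> V \<Longrightarrow> (\<psi> has_derivative blinfun_apply (\<psi>' z)) (at z)"
    and c\<phi>: "continuous_on U \<phi>'"
    and flat: "\<phi> ` (M \<inter> U) = V \<inter> L"
begin

lemma psi_in_U: "z \<in> V \<Longrightarrow> \<psi> z \<in> U"
  using img inv1 by auto

lemma id1: assumes "y \<in> U" shows "\<psi>' (\<phi> y) (\<phi>' y v) = v"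
proof -
  have "\<phi> y \<in> V" using img assms by auto
  have "((\<psi> \<circ> \<phi>) has_derivative (blinfun_apply (\<psi>' (\<phi> y)) \<circ> blinfun_apply (\<phi>' y))) (at y)"
    using diff_chain_at[OF d\<phi>[OF assms] d\<psi>[OF \<open>\<phi> y \<in> V\<close>]] .
  moreover have "((\<psi> \<circ> \<phi>) has_derivative (\<lambda>h. h)) (at y)"
    by (rule has_derivative_transform_within_open[OF has_derivative_ident oU assms]) (simp add: inv1)
  ultimately have "(blinfun_apply (\<psi>' (\<phi> y)) \<circ> blinfun_apply (\<phi>' y)) = (\<lambda>h. h)"
    by (rule has_derivative_unique)
  then show ?thesis by (metis comp_apply)
qed

lemma id2: assumes "z \<in> V" shows "\<phi>' (\<psi> z) (\<psi>' z w) = w"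
proof -
  have u: "\<psi> z \<in> U" using psi_in_U assms .
  have "((\<phi> \<circ> \<psi>) has_derivative (blinfun_apply (\<phi>' (\<psi> z)) \<circ> blinfun_apply (\<psi>' z))) (at z)"
    using diff_chain_at[OF d\<psi>[OF assms] d\<phi>[OF u]] .
  moreover have "((\<phi> \<circ> \<psi>) has_derivative (\<lambda>h. h)) (at z)"
    by (rule has_derivative_transform_within_open[OF has_derivative_ident oV assms]) (simp add: inv2)
  ultimately have "(blinfun_apply (\<phi>' (\<psi> z)) \<circ> blinfun_apply (\<psi>' z)) = (\<lambda>h. h)"
    by (rule has_derivative_unique)
  then show ?thesis by (metis comp_apply)
qed

lemma tangent_sub:
  assumes y: "y \<in> M" "y \<in> U" and v: "v \<in> tangent_space M y"
  shows "\<phi>' y v \<in> L"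
proof -
  obtain \<gamma> where g: "\<gamma> 0 = y" "\<forall>t. \<gamma> t \<in> M" "(\<gamma> has_vector_derivative v) (at 0)"
    using v unfolding tangent_space_def by auto
  have "continuous (at 0) \<gamma>" using g(3) by (rule has_vector_derivative_continuous)
  obtain e where e: "e > 0" "ball y e \<subseteq> U" using oU y(2) open_contains_ball by blast
  obtain r where r: "r > 0" "\<gamma> ` ball 0 r \<subseteq> ball (\<gamma> 0) e"
    using \<open>continuous (at 0) \<gamma>\<close>[unfolded continuous_at_ball] e(1) by blast
  have inU: "\<And>t. t \<in> ball 0 r \<Longrightarrow> \<gamma> t \<in> U" using r e g(1) by blast
  have "((\<phi> \<circ> \<gamma>) has_derivative (blinfun_apply (\<phi>' y) \<circ> (\<lambda>t. t *\<^sub>R v))) (at 0)"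
    using diff_chain_at[of \<gamma> "\<lambda>t. t *\<^sub>R v" 0 \<phi> "\<phi>' y"] g(3) d\<phi>[OF y(2)] g(1)
    unfolding has_vector_derivative_def by simp
  then have "((\<phi> \<circ> \<gamma>) has_vector_derivative \<phi>' y v) (at 0)"
    unfolding has_vector_derivative_def by (simp add: o_def blinfun.scaleR_right)
  moreover have "\<And>t. t \<in> ball 0 r \<Longrightarrow> (\<phi> \<circ> \<gamma>) t \<in> L"
    using inU g(2) flat by auto
  ultimately show ?thesis using deriv_in_subspace[OF L r(1)] by blast
qed

lemma tangent_sup:
  assumes y: "y \<in> M" "y \<in> U" and w: "w \<in> L"
  shows "\<psi>' (\<phi> y) w \<in> tangent_space M y"
proof -
  define z0 where "z0 = \<phi> y"
  have z0V: "z0 \<in> V" using img y unfolding z0_def by auto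
  obtain e where e: "e > 0" "ball z0 e \<subseteq> V" using oV z0V open_contains_ball by blast
  define \<epsilon> where "\<epsilon> = e / (2 * (norm w + 1))"
  have "2 * (norm w + 1) > 0" by (simp add: add_nonneg_pos)
  then have \<epsilon>: "\<epsilon> > 0" using e unfolding \<epsilon>_def by (intro divide_pos_pos) auto
  define c where "c = (\<lambda>t. z0 + (\<epsilon> * arctan t) *\<^sub>R w)"
  have cV: "c t \<in> V" for t
  proof -
    have "norm ((\<epsilon> * arctan t) *\<^sub>R w) = \<epsilon> * \<bar>arctan t\<bar> * norm w" using \<epsilon> by (simp add: abs_mult)
    also have "\<dots> \<le> \<epsilon> * 2 * norm w"
      using arctan_bounded[of t] \<epsilon> pi_less_4
      by (intro mult_right_mono mult_left_mono) (auto simp: abs_less_iff)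
    also have "\<dots> < e"
      unfolding \<epsilon>_def by (rule aux2[OF e(1) norm_ge_zero])
    finally have "dist z0 (c t) < e" unfolding c_def by (simp add: dist_norm)
    then show ?thesis using e(2) by (auto simp: subset_eq)
  qed
  have cL: "c t \<in> L" for t
  proof -
    have "z0 \<in> L" using flat y z0V unfolding z0_def by auto
    then show ?thesis unfolding c_def using L w by (simp add: subspace_add subspace_scale)
  qed
  have cM: "\<psi> (c t) \<in> M" for t
  proof -
    have "c t \<in> \<phi> ` (M \<inter> U)" using flat cV cL by auto
    then obtain u where "u \<in> M \<inter> U" "c t = \<phi> u" by auto
    then show ?thesis using inv1 by auto
  qed
  have h1: "((\<lambda>t. \<epsilon> * arctan t) has_field_derivative \<epsilon>) (at 0)"
    using DERIV_cmult[OF DERIV_arctan[of 0], of \<epsilon>] by simp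
  have h2: "((\<lambda>t. (\<epsilon> * arctan t) *\<^sub>R w) has_vector_derivative (\<epsilon> *\<^sub>R w)) (at 0)"
    using has_vector_derivative_scaleR[OF h1 has_vector_derivative_const[of w]] by simp
  have dc: "(c has_vector_derivative (\<epsilon> *\<^sub>R w)) (at 0)"
    unfolding c_def using has_vector_derivative_add[OF has_vector_derivative_const[of z0] h2] by simp
  have c0: "c 0 = z0" unfolding c_def by simp
  have "((\<psi> \<circ> c) has_vector_derivative (\<psi>' z0 (\<epsilon> *\<^sub>R w))) (at 0)"
    using diff_chain_at[OF dc[unfolded has_vector_derivative_def], of \<psi> "\<psi>' z0"] d\<psi>[OF z0V] c0
    unfolding has_vector_derivative_def by (simp add: o_def blinfun.scaleR_right)
  moreover have "(\<psi> \<circ> c) 0 = y" using c0 inv1 y unfolding z0_def by simp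
  ultimately have "\<psi>' z0 (\<epsilon> *\<^sub>R w) \<in> tangent_space M y"
    unfolding tangent_space_def using cM by (auto intro!: exI[of _ "\<psi> \<circ> c"])
  then have "(1/\<epsilon>) *\<^sub>R \<psi>' z0 (\<epsilon> *\<^sub>R w) \<in> tangent_space M y" by (rule tangent_scale)
  then show ?thesis using \<epsilon> unfolding z0_def by (simp add: blinfun.scaleR_right)
qed

lemma tangent_eq:
  assumes y: "y \<in> M" "y \<in> U"
  shows "tangent_space M y = blinfun_apply (\<psi>' (\<phi> y)) ` L"
proof
  show "blinfun_apply (\<psi>' (\<phi> y)) ` L \<subseteq> tangent_space M y" using tangent_sup[OF y] by auto
  show "tangent_space M y \<subseteq> blinfun_apply (\<psi>' (\<phi> y)) ` L"
  proof
    fix v assume "v \<in> tangent_space M y"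
    then have "\<phi>' y v \<in> L" by (rule tangent_sub[OF y])
    moreover have "v = \<psi>' (\<phi> y) (\<phi>' y v)" using id1 y by simp
    ultimately show "v \<in> blinfun_apply (\<psi>' (\<phi> y)) ` L" by blast
  qed
qed

lemma tangent_subspace: "y \<in> M \<Longrightarrow> y \<in> U \<Longrightarrow> subspace (tangent_space M y)"
  using tangent_eq linear_subspace_image[OF bounded_linear.linear[OF blinfun.bounded_linear_right] L] by simp

lemma tangent_dim: assumes y: "y \<in> M" "y \<in> U" shows "dim (tangent_space M y) = dim L"
proof -
  have yV: "\<phi> y \<in> V" using img y by auto
  have "inj (blinfun_apply (\<psi>' (\<phi> y)))"
    by (rule injI) (metis id2[OF yV] inv1 y(2))
  then show ?thesis unfolding tangent_eq[OF y]
    by (intro dim_image_eq bounded_linear.linear[OF blinfun.bounded_linear_right]) (auto intro: inj_on_subset)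
qed

lemma tangent_closed:
  assumes x: "x \<in> M" "x \<in> U" and xk: "\<And>k. xk k \<in> M" "xk \<longlonglongrightarrow> x"
    and vk: "\<And>k. vk k \<in> tangent_space M (xk k)" "vk \<longlonglongrightarrow> v"
  shows "v \<in> tangent_space M x"
proof -
  have ev: "eventually (\<lambda>k. xk k \<in> U) sequentially"
    using xk(2) oU x(2) by (rule topological_tendstoD)
  have c: "isCont \<phi>' x" using c\<phi> oU x(2) continuous_on_eq_continuous_at by blast
  have lim: "(\<lambda>k. \<phi>' (xk k) (vk k)) \<longlonglongrightarrow> \<phi>' x v"
    by (rule blinfun.tendsto[OF isCont_tendsto_compose[OF c xk(2)] vk(2)])
  have "eventually (\<lambda>k. \<phi>' (xk k) (vk k) \<in> L) sequentially"
    using ev by eventually_elim (use tangent_sub xk(1) vk(1) in blast)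
  then have "\<phi>' x v \<in> L" using Lim_in_closed_set[OF closed_subspace[OF L] _ _ lim] by simp
  then have "\<psi>' (\<phi> x) (\<phi>' x v) \<in> tangent_space M x" by (rule tangent_sup[OF x])
  then show ?thesis using id1[OF x(2)] by simp
qed

end

locale sform =
  fixes q :: "'a::euclidean_space \<Rightarrow> 'a \<Rightarrow> real" and T :: "'a set"
  assumes sym: "\<And>v w. q v w = q w v" and lin: "\<And>w. linear (\<lambda>v. q v w)"
    and T: "subspace T" and posd: "\<And>v. v \<in> T \<Longrightarrow> v \<noteq> 0 \<Longrightarrow> q v v > 0"
begin

lemma addL: "q (a + b) w = q a w + q b w" using linear_add[OF lin] by blast
lemma scaleL: "q (c *\<^sub>R a) w = c * q a w" using linear_scale[OF lin] by simp
lemma addR: "q w (a + b) = q w a + q w b" using addL sym by metis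
lemma scaleR: "q w (c *\<^sub>R a) = c * q w a" using scaleL sym by metis
lemma zeroL: "q 0 w = 0" using linear_0[OF lin] by blast
lemma negL: "q (- a) w = - q a w" using scaleL[of "-1" a w] by simp
lemma negR: "q w (- a) = - q w a" using negL sym by metis

lemma nonneg: "v \<in> T \<Longrightarrow> 0 \<le> q v v"
  using posd[of v] zeroL by (cases "v = 0") auto

lemma expand: "q (a + t *\<^sub>R b) (a + t *\<^sub>R b) = q a a + 2 * t * q a b + t^2 * q b b"
  by (simp add: addL addR scaleL scaleR sym[of b a] power2_eq_square algebra_simps)

lemma cs_sq: assumes a: "a \<in> T" and b: "b \<in> T" shows "(q a b)^2 \<le> q a a * q b b"
proof -
  have H: "0 \<le> q a a + 2 * t * q a b + t^2 * q b b" for t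
    using nonneg[of "a + t *\<^sub>R b"] T a b expand by (simp add: subspace_add subspace_scale)
  show ?thesis
  proof (cases "q b b = 0")
    case True
    have "q a b = 0"
    proof (rule ccontr)
      assume ne: "q a b \<noteq> 0"
      have "0 \<le> q a a + 2 * (- (q a a + 1) / (2 * q a b)) * q a b"
        using H[of "- (q a a + 1) / (2 * q a b)"] True by simp
      also have "\<dots> = -1" using ne by (simp add: field_simps)
      finally show False by simp
    qed
    then show ?thesis using True by simp
  next
    case False
    then have Bp: "q b b > 0" using nonneg[OF b] by simp
    have "0 \<le> q a a + 2 * (- q a b / q b b) * q a b + (- q a b / q b b)^2 * q b b"
      using H by blast
    also have "\<dots> = q a a - (q a b)^2 / q b b" using Bp by (simp add: field_simps power2_eq_square)
    finally have "(q a b)^2 / q b b \<le> q a a" by simp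
    then show ?thesis using Bp by (simp add: divide_le_eq mult.commute)
  qed
qed

lemma cs: assumes a: "a \<in> T" and b: "b \<in> T" shows "q a b \<le> sqrt (q a a) * sqrt (q b b)"
proof -
  have "q a b \<le> \<bar>q a b\<bar>" by simp
  also have "\<dots> = sqrt ((q a b)^2)" by simp
  also have "\<dots> \<le> sqrt (q a a * q b b)" using cs_sq[OF a b] by (rule real_sqrt_le_mono)
  also have "\<dots> = sqrt (q a a) * sqrt (q b b)" by (simp add: real_sqrt_mult)
  finally show ?thesis .
qed

lemma tri: assumes a: "a \<in> T" and b: "b \<in> T"
  shows "sqrt (q (a + b) (a + b)) \<le> sqrt (q a a) + sqrt (q b b)"
proof -
  have A: "0 \<le> q a a" and B: "0 \<le> q b b" using nonneg a b by auto
  have "q (a + b) (a + b) = q a a + 2 * q a b + q b b"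
    by (simp add: addL addR sym[of b a])
  also have "\<dots> \<le> q a a + 2 * (sqrt (q a a) * sqrt (q b b)) + q b b" using cs[OF a b] by simp
  also have "\<dots> = (sqrt (q a a) + sqrt (q b b))^2" using A B by (simp add: power2_eq_square algebra_simps)
  finally have "sqrt (q (a + b) (a + b)) \<le> sqrt ((sqrt (q a a) + sqrt (q b b))^2)"
    by (rule real_sqrt_le_mono)
  also have "\<dots> = sqrt (q a a) + sqrt (q b b)" using A B by simp
  finally show ?thesis .
qed

lemma neg: "q (- a) (- a) = q a a" by (simp add: negL negR)

end

lemma sform_at:
  assumes "riemannian_metric M g" "x \<in> M" "subspace (tangent_space M x)"
  shows "sform (g x) (tangent_space M x)"
  using assms unfolding riemannian_metric_def sform_def by blast

lemma mfd_facts: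
  fixes M :: "'a::euclidean_space set"
  assumes "closed_manifold M"
  obtains d where "\<And>x. x \<in> M \<Longrightarrow> subspace (tangent_space M x)"
    and "\<And>x. x \<in> M \<Longrightarrow> dim (tangent_space M x) = d"
    and "\<And>xk x vk v. x \<in> M \<Longrightarrow> (\<And>k. xk k \<in> M) \<Longrightarrow> xk \<longlonglongrightarrow> x \<Longrightarrow>
          (\<And>k. vk k \<in> tangent_space M (xk k)) \<Longrightarrow> vk \<longlonglongrightarrow> v \<Longrightarrow> v \<in> tangent_space M x"
proof -
  obtain d where sm: "C1_submanifold M d" using assms unfolding closed_manifold_def by blast
  have ch: "\<exists>U V L \<phi> \<psi> \<phi>' \<psi>'. chart M U V L \<phi> \<psi> \<phi>' \<psi>' \<and> x \<in> U \<and> dim L = d" if xM: "x \<in> M" for x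
  proof -
    obtain U V :: "'a set" and \<phi> \<psi> :: "'a \<Rightarrow> 'a" and L :: "'a set"
      where c: "open U" "x \<in> U" "open V" "subspace L" "dim L = d"
        "\<phi> ` U = V" "\<forall>y\<in>U. \<psi> (\<phi> y) = y" "\<forall>z\<in>V. \<phi> (\<psi> z) = z"
        "C1_on \<phi> U" "C1_on \<psi> V" "\<phi> ` (M \<inter> U) = V \<inter> L"
      using bspec[OF sm[unfolded C1_submanifold_def] xM] by (elim exE conjE) (rule that; assumption)
    obtain \<phi>' where p: "\<forall>y\<in>U. (\<phi> has_derivative blinfun_apply (\<phi>' y)) (at y)" "continuous_on U \<phi>'"
      using c(9) unfolding C1_on_def by blast
    obtain \<psi>' where q: "\<forall>y\<in>V. (\<psi> has_derivative blinfun_apply (\<psi>' y)) (at y)"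
      using c(10) unfolding C1_on_def by blast
    have "chart M U V L \<phi> \<psi> \<phi>' \<psi>'"
      unfolding chart_def using c(1,3,4,6,7,8,11) p q by blast
    then show ?thesis using c by blast
  qed
  show ?thesis
  proof
    fix x assume x: "x \<in> M"
    then obtain U V L \<phi> \<psi> \<phi>' \<psi>' where c: "chart M U V L \<phi> \<psi> \<phi>' \<psi>'" "x \<in> U" "dim L = d"
      using ch by blast
    show "subspace (tangent_space M x)" using chart.tangent_subspace[OF c(1) x c(2)] .
    show "dim (tangent_space M x) = d" using chart.tangent_dim[OF c(1) x c(2)] c(3) by simp
  next
    fix xk x vk v
    assume x: "x \<in> M" and xk: "\<And>k. xk k \<in> M" "xk \<longlonglongrightarrow> x"
      and vk: "\<And>k. vk k \<in> tangent_space M (xk k)" "vk \<longlonglongrightarrow> v"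
    obtain U V L \<phi> \<psi> \<phi>' \<psi>' where c: "chart M U V L \<phi> \<psi> \<phi>' \<psi>'" "x \<in> U"
      using ch x by blast
    show "v \<in> tangent_space M x" using chart.tangent_closed[OF c(1) x c(2) xk vk] .
  qed
qed

primrec Dn :: "('a \<Rightarrow> 'a) \<Rightarrow> ('a::euclidean_space \<Rightarrow> 'a \<Rightarrow>\<^sub>L 'a) \<Rightarrow> nat \<Rightarrow> 'a \<Rightarrow> 'a \<Rightarrow> 'a" where
  "Dn F F' 0 x v = v"
| "Dn F F' (Suc n) x v = F' ((F ^^ n) x) (Dn F F' n x v)"

definition PP where "PP F F' g n x v = rnorm g ((F ^^ n) x) (Dn F F' n x v)"

lemma Dn_add: "Dn F F' n x (a + b) = Dn F F' n x a + Dn F F' n x b"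
  by (induction n) (auto simp: blinfun.add_right)

lemma Dn_neg: "Dn F F' n x (- a) = - Dn F F' n x a"
  by (induction n) (auto simp: blinfun.minus_right)

lemma orbit_pt: assumes "xs \<in> orbits M F" shows "xs (int n) = (F ^^ n) (xs 0)"
proof (induction n)
  case (Suc n)
  have "xs (int (Suc n)) = F (xs (int n))" using assms unfolding orbits_def by (simp add: add.commute)
  then show ?case using Suc by simp
qed simp

lemma orbit_D_eq: assumes "xs \<in> orbits M F" shows "orbit_D F' xs 0 n v = Dn F F' n (xs 0) v"
  by (induction n) (auto simp: orbit_pt[OF assms])

lemma orbit_rnorm: assumes "xs \<in> orbits M F"
  shows "rnorm g (xs (int n)) (orbit_D F' xs 0 n v) = PP F F' g n (xs 0) v"
  using orbit_pt[OF assms] orbit_D_eq[OF assms] by (simp add: PP_def)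

locale setting =
  fixes M :: "'a::euclidean_space set" and F :: "'a \<Rightarrow> 'a" and F' :: "'a \<Rightarrow> 'a \<Rightarrow>\<^sub>L 'a"
    and g :: "'a \<Rightarrow> 'a \<Rightarrow> 'a \<Rightarrow> real"
    and \<nu> \<gamma>1 \<gamma>2 \<mu> C :: real
  assumes cm: "closed_manifold M"
    and ld: "C1_local_diffeo M F F'"
    and rm: "riemannian_metric M g"
    and cons: "0 < \<nu>" "\<nu> < \<gamma>1" "\<gamma>1 \<le> \<gamma>2" "\<gamma>2 < \<mu>" "1 < C"
begin

lemma FM: "x \<in> M \<Longrightarrow> F x \<in> M" using ld unfolding C1_local_diffeo_def by auto

lemma FnM: "x \<in> M \<Longrightarrow> (F ^^ n) x \<in> M" by (induction n) (auto simp: FM)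

lemma Tsub: "x \<in> M \<Longrightarrow> subspace (tangent_space M x)"
  using mfd_facts[OF cm] by metis

lemma DT: "x \<in> M \<Longrightarrow> v \<in> tangent_space M x \<Longrightarrow> F' x v \<in> tangent_space M (F x)"
  using ld unfolding C1_local_diffeo_def by blast

lemma DnT: "x \<in> M \<Longrightarrow> v \<in> tangent_space M x \<Longrightarrow> Dn F F' n x v \<in> tangent_space M ((F ^^ n) x)"
  by (induction n) (auto intro: DT FnM)

lemma est_at: assumes x: "x \<in> M"
  shows "est (tangent_space M x) (\<lambda>n v. PP F F' g n x v) C \<nu> \<gamma>1 \<gamma>2 \<mu>"
proof
  show "subspace (tangent_space M x)" using Tsub x .
  fix n a b
  assume a: "a \<in> tangent_space M x" and b: "b \<in> tangent_space M x"
  have y: "(F ^^ n) x \<in> M" using FnM x .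
  interpret s: sform "g ((F ^^ n) x)" "tangent_space M ((F ^^ n) x)"
    using sform_at[OF rm y Tsub[OF y]] .
  show "PP F F' g n x (a + b) \<le> PP F F' g n x a + PP F F' g n x b"
    unfolding PP_def rnorm_def Dn_add using s.tri DnT x a b by blast
next
  fix n a assume a: "a \<in> tangent_space M x"
  have y: "(F ^^ n) x \<in> M" using FnM x .
  interpret s: sform "g ((F ^^ n) x)" "tangent_space M ((F ^^ n) x)"
    using sform_at[OF rm y Tsub[OF y]] .
  show "PP F F' g n x (- a) = PP F F' g n x a"
    unfolding PP_def rnorm_def Dn_neg using s.neg by simp
  show "0 \<le> PP F F' g n x a"
    unfolding PP_def rnorm_def using s.nonneg DnT x a by simp
next
  fix a assume a: "a \<in> tangent_space M x" "a \<noteq> 0"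
  interpret s: sform "g x" "tangent_space M x"
    using sform_at[OF rm x Tsub[OF x]] .
  show "0 < PP F F' g 0 x a" unfolding PP_def rnorm_def using s.posd a by simp
qed (use cons in auto)

lemma full_from_split:
  assumes xs: "xs \<in> orbits M F" and sp: "ph_splitting M F' g \<nu> \<gamma>1 \<gamma>2 \<mu> C xs Es Ec Eu"
  shows "est.full3 (tangent_space M (xs 0)) (\<lambda>n v. PP F F' g n (xs 0) v) C \<nu> \<gamma>1 \<gamma>2 \<mu> (Es 0) (Ec 0) (Eu 0)"
proof -
  have x0: "xs 0 \<in> M" using xs unfolding orbits_def by auto
  interpret e: est "tangent_space M (xs 0)" "\<lambda>n v. PP F F' g n (xs 0) v" C \<nu> \<gamma>1 \<gamma>2 \<mu>
    using est_at[OF x0] .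
  have s: "subspace (Es 0)" "subspace (Ec 0)" "subspace (Eu 0)"
    and sum: "{a + b + c | a b c. a \<in> Es 0 \<and> b \<in> Ec 0 \<and> c \<in> Eu 0} = tangent_space M (xs 0)"
    and dm: "dim (Es 0) + dim (Ec 0) + dim (Eu 0) = dim (tangent_space M (xs 0))"
    using sp unfolding ph_splitting_def by blast+
  have sub: "Es 0 \<subseteq> tangent_space M (xs 0)" "Ec 0 \<subseteq> tangent_space M (xs 0)" "Eu 0 \<subseteq> tangent_space M (xs 0)"
  proof -
    have z: "0 \<in> Es 0" "0 \<in> Ec 0" "0 \<in> Eu 0" using s subspace_0 by auto
    show "Es 0 \<subseteq> tangent_space M (xs 0)"
    proof
      fix a assume "a \<in> Es 0" then have "a + 0 + 0 \<in> tangent_space M (xs 0)" using z sum by blast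
      then show "a \<in> tangent_space M (xs 0)" by simp
    qed
    show "Ec 0 \<subseteq> tangent_space M (xs 0)"
    proof
      fix a assume "a \<in> Ec 0" then have "0 + a + 0 \<in> tangent_space M (xs 0)" using z sum by blast
      then show "a \<in> tangent_space M (xs 0)" by simp
    qed
    show "Eu 0 \<subseteq> tangent_space M (xs 0)"
    proof
      fix a assume "a \<in> Eu 0" then have "0 + 0 + a \<in> tangent_space M (xs 0)" using z sum by blast
      then show "a \<in> tangent_space M (xs 0)" by simp
    qed
  qed
  have p0: "PP F F' g 0 (xs 0) v = rnorm g (xs 0) v" for v by (simp add: PP_def)
  have est1: "\<forall>k. \<forall>v\<in>Es 0. rnorm g (xs (0 + int k)) (orbit_D F' xs 0 k v) \<le> C * \<nu> ^ k * rnorm g (xs 0) v"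
   and est2: "\<forall>k. \<forall>v\<in>Ec 0. \<gamma>1 ^ k * rnorm g (xs 0) v / C \<le> rnorm g (xs (0 + int k)) (orbit_D F' xs 0 k v)
                     \<and> rnorm g (xs (0 + int k)) (orbit_D F' xs 0 k v) \<le> C * \<gamma>2 ^ k * rnorm g (xs 0) v"
   and est3: "\<forall>k. \<forall>v\<in>Eu 0. \<mu> ^ k * rnorm g (xs 0) v / C \<le> rnorm g (xs (0 + int k)) (orbit_D F' xs 0 k v)"
    using sp unfolding ph_splitting_def by blast+
  show ?thesis
    unfolding e.full3_def e.good3_def
    using s sum dm sub est1 est2 est3 by (simp add: orbit_rnorm[OF xs] p0)
qed

end

lemma multi_subseq:
  fixes b :: "nat \<Rightarrow> nat \<Rightarrow> 'a::euclidean_space"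
  assumes "\<And>k i. i < m \<Longrightarrow> norm (b k i) = 1"
  shows "\<exists>r e. strict_mono r \<and> (\<forall>i<m. (\<lambda>k. b (r k) i) \<longlonglongrightarrow> e i)"
  using assms
proof (induction m)
  case 0
  show ?case by (rule exI[of _ id]) (auto simp: strict_mono_def)
next
  case (Suc m)
  have "\<And>k i. i < m \<Longrightarrow> norm (b k i) = 1" using Suc.prems by simp
  then have "\<exists>r e. strict_mono r \<and> (\<forall>i<m. (\<lambda>k. b (r k) i) \<longlonglongrightarrow> e i)" by (rule Suc.IH)
  then obtain r e where r: "strict_mono r" "\<forall>i<m. (\<lambda>k. b (r k) i) \<longlonglongrightarrow> e i"
    by blast
  have "\<forall>n. (\<lambda>k. b (r k) m) n \<in> sphere (0::'a) 1" using Suc.prems by simp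
  then obtain l r2 where l: "l \<in> sphere (0::'a) 1" "strict_mono r2" "((\<lambda>k. b (r k) m) \<circ> r2) \<longlonglongrightarrow> l"
    by (rule seq_compactE[OF compact_imp_seq_compact[OF compact_sphere]])
  show ?case
  proof (intro exI conjI allI impI)
    show "strict_mono (r \<circ> r2)" using strict_mono_o r(1) l(2) by blast
    fix i assume i: "i < Suc m"
    show "(\<lambda>k. b ((r \<circ> r2) k) i) \<longlonglongrightarrow> (e(m := l)) i"
    proof (cases "i = m")
      case True then show ?thesis using l(3) by (simp add: o_def)
    next
      case False
      then have "i < m" using i by simp
      then have "((\<lambda>k. b (r k) i) \<circ> r2) \<longlonglongrightarrow> e i" using LIMSEQ_subseq_LIMSEQ r(2) l(2) by blast
      then show ?thesis using False by (simp add: o_def)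
    qed
  qed
qed

lemma limit_subspace:
  fixes S :: "nat \<Rightarrow> 'a::euclidean_space set"
  assumes sS: "\<And>k. subspace (S k)" and dS: "\<And>k. dim (S k) = m"
  obtains r Lm where "strict_mono r" "subspace Lm" "dim Lm = m"
    "\<And>v. v \<in> Lm \<Longrightarrow> \<exists>vs. (\<forall>k. vs k \<in> S (r k)) \<and> vs \<longlonglongrightarrow> v"
proof -
  have ex: "\<forall>k. \<exists>bk. (\<forall>i<m. bk i \<in> S k \<and> norm (bk i) = 1) \<and> (\<forall>i<m. \<forall>j<m. i \<noteq> j \<longrightarrow> bk i \<bullet> bk j = 0)"
  proof
    fix k
    obtain B where B: "B \<subseteq> S k" "pairwise orthogonal B" "\<And>x. x \<in> B \<Longrightarrow> norm x = 1"
      "independent B" "card B = dim (S k)" "span B = S k"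
      using orthonormal_basis_subspace[OF sS[of k]] by blast
    have fB: "finite B" using B(4) independent_imp_finite by blast
    obtain h where h: "bij_betw h {0..<card B} B" using ex_bij_betw_nat_finite[OF fB] by blast
    have cB: "card B = m" using B(5) dS by simp
    have hB: "h i \<in> B" if "i < m" for i using bij_betwE[OF h] cB that by simp
    have hinj: "h i \<noteq> h j" if "i < m" "j < m" "i \<noteq> j" for i j
      using bij_betw_imp_inj_on[OF h] cB that unfolding inj_on_def by (metis atLeastLessThan_iff zero_le)
    have orth: "\<And>x y. x \<in> B \<Longrightarrow> y \<in> B \<Longrightarrow> x \<noteq> y \<Longrightarrow> x \<bullet> y = 0"
      using B(2) unfolding pairwise_def orthogonal_def by blast
    show "\<exists>bk. (\<forall>i<m. bk i \<in> S k \<and> norm (bk i) = 1) \<and> (\<forall>i<m. \<forall>j<m. i \<noteq> j \<longrightarrow> bk i \<bullet> bk j = 0)"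
    proof (rule exI[of _ h], intro conjI allI impI)
      fix i assume i: "i < m"
      show "h i \<in> S k" using hB[OF i] B(1) by blast
      show "norm (h i) = 1" using hB[OF i] B(3) by blast
    next
      fix i j assume ij: "i < m" "j < m" "i \<noteq> j"
      show "h i \<bullet> h j = 0" using orth[OF hB[OF ij(1)] hB[OF ij(2)] hinj[OF ij]] .
    qed
  qed
  obtain b where b0: "\<forall>k. (\<forall>i<m. b k i \<in> S k \<and> norm (b k i) = 1) \<and> (\<forall>i<m. \<forall>j<m. i \<noteq> j \<longrightarrow> b k i \<bullet> b k j = 0)"
    using choice[OF ex] by blast
  have b1: "\<And>k i. i < m \<Longrightarrow> b k i \<in> S k" using b0 by simp
  have b2: "\<And>k i. i < m \<Longrightarrow> norm (b k i) = 1" using b0 by simp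
  have b3: "\<And>k i j. i < m \<Longrightarrow> j < m \<Longrightarrow> i \<noteq> j \<Longrightarrow> b k i \<bullet> b k j = 0"
    using b0 by simp
  note b = b1 b2 b3
  obtain r e where r: "strict_mono r" "\<And>i. i < m \<Longrightarrow> (\<lambda>k. b (r k) i) \<longlonglongrightarrow> e i"
    using multi_subseq[of m b] b(2) by blast
  have ne: "norm (e i) = 1" if "i < m" for i
  proof -
    have "(\<lambda>k. norm (b (r k) i)) \<longlonglongrightarrow> norm (e i)" using r(2)[OF that] by (rule tendsto_norm)
    moreover have "(\<lambda>k. norm (b (r k) i)) \<longlonglongrightarrow> 1" using b(2)[OF that] by simp
    ultimately show ?thesis using LIMSEQ_unique by blast
  qed
  have oe: "e i \<bullet> e j = 0" if "i < m" "j < m" "i \<noteq> j" for i j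
  proof -
    have "(\<lambda>k. b (r k) i \<bullet> b (r k) j) \<longlonglongrightarrow> e i \<bullet> e j" using r(2) that by (intro tendsto_inner) auto
    moreover have "(\<lambda>k. b (r k) i \<bullet> b (r k) j) \<longlonglongrightarrow> 0" using b(3)[OF that] by simp
    ultimately show ?thesis using LIMSEQ_unique by blast
  qed
  have inj: "inj_on e {..<m}"
  proof (rule inj_onI)
    fix i j assume ij: "i \<in> {..<m}" "j \<in> {..<m}" "e i = e j"
    show "i = j"
    proof (rule ccontr)
      assume "i \<noteq> j"
      then have "e i \<bullet> e i = 0" using oe[of i j] ij by simp
      then show False using ne[of i] ij by simp
    qed
  qed
  define E where "E = e ` {..<m}"
  have indE: "independent E"
  proof (rule pairwise_orthogonal_independent)
    show "pairwise orthogonal E" unfolding E_def pairwise_def orthogonal_def using oe by auto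
    show "0 \<notin> E" unfolding E_def using ne by (metis imageE lessThan_iff norm_zero zero_neq_one)
  qed
  have cE: "card E = m" unfolding E_def using card_image[OF inj] by simp
  show ?thesis
  proof (rule that[OF r(1), of "span E"])
    show "subspace (span E)" by simp
    show "dim (span E) = m" using dim_span_eq_card_independent[OF indE] cE by simp
    fix v assume "v \<in> span E"
    then obtain u where u: "v = (\<Sum>x\<in>E. u x *\<^sub>R x)" using span_finite[of E] unfolding E_def by auto
    have v: "v = (\<Sum>i<m. u (e i) *\<^sub>R e i)" unfolding u E_def using sum.reindex[OF inj] by simp
    define vs where "vs = (\<lambda>k. \<Sum>i<m. u (e i) *\<^sub>R b (r k) i)"
    show "\<exists>vs. (\<forall>k. vs k \<in> S (r k)) \<and> vs \<longlonglongrightarrow> v"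
    proof (intro exI conjI allI)
      fix k show "vs k \<in> S (r k)" unfolding vs_def
        by (intro subspace_sum[OF sS] subspace_scale[OF sS] b(1)) auto
    next
      show "vs \<longlonglongrightarrow> v" unfolding vs_def v
        by (intro tendsto_sum tendsto_scaleR tendsto_const r(2)) auto
    qed
  qed
qed

context setting
begin

lemma Fcont: "x \<in> M \<Longrightarrow> isCont F x"
  using ld unfolding C1_local_diffeo_def by (meson has_derivative_continuous subsetD)

lemma F'cont: "x \<in> M \<Longrightarrow> isCont F' x"
proof -
  assume x: "x \<in> M"
  obtain W where "open W" "M \<subseteq> W" "continuous_on W F'"
    using ld unfolding C1_local_diffeo_def by blast
  then show ?thesis using x continuous_on_eq_continuous_at by blast
qed

lemma Fn_lim: "x \<in> M \<Longrightarrow> y \<longlonglongrightarrow> x \<Longrightarrow> (\<lambda>k. (F ^^ n) (y k)) \<longlonglongrightarrow> (F ^^ n) x"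
proof (induction n)
  case (Suc n)
  then show ?case using isCont_tendsto_compose[OF Fcont[OF FnM[OF Suc.prems(1)]] Suc.IH] by simp
qed simp

lemma Dn_lim: "x \<in> M \<Longrightarrow> y \<longlonglongrightarrow> x \<Longrightarrow> u \<longlonglongrightarrow> v \<Longrightarrow>
   (\<lambda>k. Dn F F' n (y k) (u k)) \<longlonglongrightarrow> Dn F F' n x v"
proof (induction n)
  case (Suc n)
  have "(\<lambda>k. F' ((F ^^ n) (y k))) \<longlonglongrightarrow> F' ((F ^^ n) x)"
    using isCont_tendsto_compose[OF F'cont[OF FnM[OF Suc.prems(1)]] Fn_lim[OF Suc.prems(1,2)]] .
  then show ?case using blinfun.tendsto Suc by simp
qed simp

lemma PP_lim:
  assumes x: "x \<in> M" and y: "\<And>k. y k \<in> M" "y \<longlonglongrightarrow> x" and u: "u \<longlonglongrightarrow> v"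
  shows "(\<lambda>k. PP F F' g n (y k) (u k)) \<longlonglongrightarrow> PP F F' g n x v"
proof -
  have gc: "continuous_on (M \<times> UNIV \<times> UNIV) (\<lambda>(x, v, w). g x v w)" using rm unfolding riemannian_metric_def by blast
  let ?z = "\<lambda>k. ((F ^^ n) (y k), Dn F F' n (y k) (u k), Dn F F' n (y k) (u k))"
  have zl: "?z \<longlonglongrightarrow> ((F ^^ n) x, Dn F F' n x v, Dn F F' n x v)"
    using Fn_lim[OF x y(2)] Dn_lim[OF x y(2) u] by (intro tendsto_Pair) auto
  have "(\<lambda>k. (\<lambda>(x, v, w). g x v w) (?z k)) \<longlonglongrightarrow> (\<lambda>(x, v, w). g x v w) ((F ^^ n) x, Dn F F' n x v, Dn F F' n x v)"
    by (rule continuous_on_tendsto_compose[OF gc zl]) (auto simp: FnM x y(1))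
  then have "(\<lambda>k. g ((F ^^ n) (y k)) (Dn F F' n (y k) (u k)) (Dn F F' n (y k) (u k)))
     \<longlonglongrightarrow> g ((F ^^ n) x) (Dn F F' n x v) (Dn F F' n x v)" by simp
  then show ?thesis unfolding PP_def rnorm_def by (rule tendsto_real_sqrt)
qed

lemma lim_dims:
  assumes x: "x \<in> M" and y: "\<And>k. y k \<in> M" "y \<longlonglongrightarrow> x"
    and fk: "\<And>k. est.full3 (tangent_space M (y k)) (\<lambda>n v. PP F F' g n (y k) v) C \<nu> \<gamma>1 \<gamma>2 \<mu> (Es k) (Ec k) (Eu k)"
    and dk: "\<And>k. dim (Es k) = a" "\<And>k. dim (Ec k) = b" "\<And>k. dim (Eu k) = c"
    and f: "est.full3 (tangent_space M x) (\<lambda>n v. PP F F' g n x v) C \<nu> \<gamma>1 \<gamma>2 \<mu> Es0 Ec0 Eu0"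
  shows "a = dim Es0 \<and> b = dim Ec0 \<and> c = dim Eu0"
proof -
  obtain d where Tsub': "\<And>x. x \<in> M \<Longrightarrow> subspace (tangent_space M x)"
    and Tdim: "\<And>x. x \<in> M \<Longrightarrow> dim (tangent_space M x) = d"
    and Tcl: "\<And>xk x vk v. x \<in> M \<Longrightarrow> (\<And>k. xk k \<in> M) \<Longrightarrow> xk \<longlonglongrightarrow> x \<Longrightarrow>
          (\<And>k. vk k \<in> tangent_space M (xk k)) \<Longrightarrow> vk \<longlonglongrightarrow> v \<Longrightarrow> v \<in> tangent_space M x"
    using mfd_facts[OF cm] by metis
  have gk: "est.good3 (tangent_space M (y k)) (\<lambda>n v. PP F F' g n (y k) v) C \<nu> \<gamma>1 \<gamma>2 \<mu> (Es k) (Ec k) (Eu k)" for k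
    using fk[of k] est.full3_def[OF est_at[OF y(1)]] by blast
  note gk' = est.good3_def[OF est_at[OF y(1)], THEN iffD1, OF gk]
  obtain r1 Ls where r1: "strict_mono r1" "subspace Ls" "dim Ls = a"
      "\<And>v. v \<in> Ls \<Longrightarrow> \<exists>vs. (\<forall>k. vs k \<in> Es (r1 k)) \<and> vs \<longlonglongrightarrow> v"
    using limit_subspace[of Es a] gk' dk by metis
  obtain r2 Lc where r2: "strict_mono r2" "subspace Lc" "dim Lc = b"
      "\<And>v. v \<in> Lc \<Longrightarrow> \<exists>vs. (\<forall>k. vs k \<in> Ec (r1 (r2 k))) \<and> vs \<longlonglongrightarrow> v"
    using limit_subspace[of "\<lambda>k. Ec (r1 k)" b] gk' dk by metis
  obtain r3 Lu where r3: "strict_mono r3" "subspace Lu" "dim Lu = c"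
      "\<And>v. v \<in> Lu \<Longrightarrow> \<exists>vs. (\<forall>k. vs k \<in> Eu (r1 (r2 (r3 k)))) \<and> vs \<longlonglongrightarrow> v"
    using limit_subspace[of "\<lambda>k. Eu (r1 (r2 k))" c] gk' dk by metis
  define R where "R = (\<lambda>k. r1 (r2 (r3 k)))"
  have sm23: "strict_mono (\<lambda>k. r2 (r3 k))" using strict_mono_o[OF r2(1) r3(1)] by (simp add: o_def)
  have smR: "strict_mono R" using strict_mono_o[OF r1(1) sm23] by (simp add: o_def R_def)
  have yR: "(\<lambda>k. y (R k)) \<longlonglongrightarrow> x" using LIMSEQ_subseq_LIMSEQ[OF y(2) smR] by (simp add: o_def)
  have yRM: "\<And>k. y (R k) \<in> M" using y(1) .
  have as: "\<exists>vs. (\<forall>k. vs k \<in> Es (R k)) \<and> vs \<longlonglongrightarrow> v" if vL: "v \<in> Ls" for v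
  proof -
    obtain vs where vs: "\<forall>k. vs k \<in> Es (r1 k)" "vs \<longlonglongrightarrow> v" using r1(4)[OF vL] by blast
    show ?thesis
      using vs LIMSEQ_subseq_LIMSEQ[OF vs(2) sm23] by (intro exI[of _ "\<lambda>k. vs (r2 (r3 k))"]) (auto simp: R_def o_def)
  qed
  have ac: "\<exists>vs. (\<forall>k. vs k \<in> Ec (R k)) \<and> vs \<longlonglongrightarrow> v" if vL: "v \<in> Lc" for v
  proof -
    obtain vs where vs: "\<forall>k. vs k \<in> Ec (r1 (r2 k))" "vs \<longlonglongrightarrow> v" using r2(4)[OF vL] by blast
    show ?thesis
      using vs LIMSEQ_subseq_LIMSEQ[OF vs(2) r3(1)] by (intro exI[of _ "\<lambda>k. vs (r3 k)"]) (auto simp: R_def o_def)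
  qed
  have au: "\<exists>vs. (\<forall>k. vs k \<in> Eu (R k)) \<and> vs \<longlonglongrightarrow> v" if "v \<in> Lu" for v
    using r3(4)[OF that] unfolding R_def .
  interpret e: est "tangent_space M x" "\<lambda>n v. PP F F' g n x v" C \<nu> \<gamma>1 \<gamma>2 \<mu> using est_at[OF x] .
  have inT: "v \<in> tangent_space M x" if "\<forall>k. vs k \<in> tangent_space M (y (R k))" "vs \<longlonglongrightarrow> v" for vs v
    using Tcl[OF x yRM yR, of vs v] that by blast
  have lim: "(\<lambda>k. PP F F' g n (y (R k)) (vs k)) \<longlonglongrightarrow> PP F F' g n x v" if "vs \<longlonglongrightarrow> v" for vs v n
    using PP_lim[OF x yRM yR that] .
  have good: "e.good3 Ls Lc Lu"
    unfolding e.good3_def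
  proof (intro conjI ballI allI)
    show "subspace Ls" "subspace Lc" "subspace Lu" using r1 r2 r3 by auto
    show "Ls \<subseteq> tangent_space M x"
    proof
      fix v assume "v \<in> Ls" then obtain vs where vs: "\<forall>k. vs k \<in> Es (R k)" "vs \<longlonglongrightarrow> v" using as by blast
      then show "v \<in> tangent_space M x" using inT[of vs v] gk' by blast
    qed
    show "Lc \<subseteq> tangent_space M x"
    proof
      fix v assume "v \<in> Lc" then obtain vs where vs: "\<forall>k. vs k \<in> Ec (R k)" "vs \<longlonglongrightarrow> v" using ac by blast
      then show "v \<in> tangent_space M x" using inT[of vs v] gk' by blast
    qed
    show "Lu \<subseteq> tangent_space M x"
    proof
      fix v assume "v \<in> Lu" then obtain vs where vs: "\<forall>k. vs k \<in> Eu (R k)" "vs \<longlonglongrightarrow> v" using au by blast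
      then show "v \<in> tangent_space M x" using inT[of vs v] gk' by blast
    qed
  next
    fix v n assume "v \<in> Ls"
    then obtain vs where vs: "\<forall>k. vs k \<in> Es (R k)" "vs \<longlonglongrightarrow> v" using as by blast
    have "\<forall>k. PP F F' g n (y (R k)) (vs k) \<le> C * \<nu> ^ n * PP F F' g 0 (y (R k)) (vs k)"
      using vs(1) gk' by blast
    then show "PP F F' g n x v \<le> C * \<nu> ^ n * PP F F' g 0 x v"
      by (intro LIMSEQ_le[OF lim[OF vs(2)] tendsto_mult[OF tendsto_const lim[OF vs(2)]]]) auto
  next
    fix v n assume "v \<in> Lc"
    then obtain vs where vs: "\<forall>k. vs k \<in> Ec (R k)" "vs \<longlonglongrightarrow> v" using ac by blast
    have h: "\<forall>k. \<gamma>1 ^ n * PP F F' g 0 (y (R k)) (vs k) / C \<le> PP F F' g n (y (R k)) (vs k)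
              \<and> PP F F' g n (y (R k)) (vs k) \<le> C * \<gamma>2 ^ n * PP F F' g 0 (y (R k)) (vs k)"
      using vs(1) gk' by blast
    show "\<gamma>1 ^ n * PP F F' g 0 x v / C \<le> PP F F' g n x v"
      using h cons by (intro LIMSEQ_le[OF tendsto_divide[OF tendsto_mult[OF tendsto_const lim[OF vs(2)]] tendsto_const] lim[OF vs(2)]]) auto
    show "PP F F' g n x v \<le> C * \<gamma>2 ^ n * PP F F' g 0 x v"
      using h by (intro LIMSEQ_le[OF lim[OF vs(2)] tendsto_mult[OF tendsto_const lim[OF vs(2)]]]) auto
  next
    fix v n assume "v \<in> Lu"
    then obtain vs where vs: "\<forall>k. vs k \<in> Eu (R k)" "vs \<longlonglongrightarrow> v" using au by blast
    have "\<forall>k. \<mu> ^ n * PP F F' g 0 (y (R k)) (vs k) / C \<le> PP F F' g n (y (R k)) (vs k)"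
      using vs(1) gk' by blast
    then show "\<mu> ^ n * PP F F' g 0 x v / C \<le> PP F F' g n x v"
      using cons by (intro LIMSEQ_le[OF tendsto_divide[OF tendsto_mult[OF tendsto_const lim[OF vs(2)]] tendsto_const] lim[OF vs(2)]]) auto
  qed
  have "dim (Es 0) + dim (Ec 0) + dim (Eu 0) = dim (tangent_space M (y 0))"
    using fk[of 0] est.full3_def[OF est_at[OF y(1)]] by blast
  then have "dim Ls + dim Lc + dim Lu = dim (tangent_space M x)"
    using dk r1(3) r2(3) r3(3) Tdim[OF x] Tdim[OF y(1)] by simp
  then show ?thesis using e.dims_eq[OF f good] r1(3) r2(3) r3(3) by simp
qed

end

lemma locconst_const:
  fixes f :: "'a::metric_space \<Rightarrow> nat"
  assumes S: "connected S" and lc: "\<And>x. x \<in> S \<Longrightarrow> \<exists>e>0. \<forall>y\<in>S. dist y x < e \<longrightarrow> f y = f x"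
    and xy: "x \<in> S" "y \<in> S"
  shows "f x = f y"
proof -
  have c: "continuous_on S (\<lambda>x. real (f x))"
    unfolding continuous_on_iff
  proof (intro ballI allI impI)
    fix z e assume z: "z \<in> S" and e: "(0::real) < e"
    obtain d where d: "d > 0" "\<forall>y\<in>S. dist y z < d \<longrightarrow> f y = f z" using lc[OF z] by blast
    show "\<exists>d>0. \<forall>x'\<in>S. dist x' z < d \<longrightarrow> dist (real (f x')) (real (f z)) < e"
      using d e by (intro exI[of _ d]) auto
  qed
  have "(\<lambda>x. real (f x)) constant_on S"
  proof (rule continuous_discrete_range_constant[OF S c])
    fix z assume "z \<in> S"
    show "\<exists>e>0. \<forall>y. y \<in> S \<and> real (f y) \<noteq> real (f z) \<longrightarrow> e \<le> norm (real (f y) - real (f z))"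
      by (intro exI[of _ 1]) (auto simp: of_nat_diff)
  qed
  then obtain c where "\<forall>x\<in>S. real (f x) = c" unfolding constant_on_def by blast
  then have "real (f x) = real (f y)" using xy by simp
  then show "f x = f y" by simp
qed

lemma orbit_pt2: assumes "xs \<in> orbits M F" shows "xs (j + int n) = (F ^^ n) (xs j)"
proof (induction n)
  case (Suc n)
  have e: "j + int (Suc n) = (j + int n) + 1" by simp
  have "xs (j + int (Suc n)) = F (xs (j + int n))" using assms unfolding orbits_def e by simp
  then show ?case using Suc by simp
qed simp

context setting
begin

definition A where "A = \<Inter> (range (\<lambda>n. (F ^^ n) ` M))"

lemma Fn_isCont: "x \<in> M \<Longrightarrow> isCont (F ^^ n) x"
proof (induction n)
  case 0 then show ?case by (simp add: id_def)
next
  case (Suc n)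
  have "(F ^^ Suc n) = F \<circ> (F ^^ n)" by simp
  then show ?case using continuous_at_compose[OF Suc.IH[OF Suc.prems] Fcont[OF FnM[OF Suc.prems]]] by (simp add: o_def)
qed

lemma Fn_cont: "continuous_on M (F ^^ n)"
  by (rule continuous_at_imp_continuous_on) (simp add: Fn_isCont)

lemma compact_M: "compact M" using cm unfolding closed_manifold_def by blast

lemma K_compact: "compact ((F ^^ n) ` M)"
  using compact_continuous_image[OF Fn_cont compact_M] .

lemma K_nest: "m \<le> n \<Longrightarrow> (F ^^ n) ` M \<subseteq> (F ^^ m) ` M"
proof -
  assume "m \<le> n"
  then obtain j where n: "n = m + j" using le_Suc_ex by blast
  have "(F ^^ n) ` M = (F ^^ m) ` ((F ^^ j) ` M)" unfolding n funpow_add by (simp add: image_comp)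
  also have "\<dots> \<subseteq> (F ^^ m) ` M" using FnM by auto
  finally show ?thesis .
qed

lemma A_connected: "connected A"
  unfolding A_def
proof (rule connected_nest)
  show "compact ((F ^^ n) ` M)" for n by (rule K_compact)
  show "connected ((F ^^ n) ` M)" for n
    using connected_continuous_image[OF Fn_cont] cm unfolding closed_manifold_def by blast
  show "\<And>m n. m \<le> n \<Longrightarrow> (F ^^ n) ` M \<subseteq> (F ^^ m) ` M" by (rule K_nest)
qed

lemma A_sub: "A \<subseteq> M"
proof -
  have "A \<subseteq> (F ^^ 0) ` M" unfolding A_def by blast
  then show ?thesis by simp
qed

lemma orbit_in_A: assumes xs: "xs \<in> orbits M F" shows "xs 0 \<in> A"
proof -
  have "xs 0 \<in> (F ^^ n) ` M" for n
  proof -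
    have "xs 0 = (F ^^ n) (xs (- int n))" using orbit_pt2[OF xs, of "- int n" n] by simp
    moreover have "xs (- int n) \<in> M" using xs unfolding orbits_def by blast
    ultimately show ?thesis by blast
  qed
  then show ?thesis unfolding A_def by blast
qed

lemma pre_ex: assumes y: "y \<in> A" shows "\<exists>z\<in>A. F z = y"
proof -
  define K where "K n = (F ^^ n) ` M \<inter> F -` {y}" for n
  have Fc: "continuous_on ((F ^^ n) ` M) F" for n
  proof (rule continuous_at_imp_continuous_on, rule ballI)
    fix w assume "w \<in> (F ^^ n) ` M"
    then obtain m where "m \<in> M" "w = (F ^^ n) m" by blast
    then show "isCont F w" using Fcont FnM by blast
  qed
  have Kc: "compact (K n)" for n
  proof -
    have cl: "closed (K n)" unfolding K_def
      by (rule continuous_closed_preimage[OF Fc compact_imp_closed[OF K_compact]]) simp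
    have "compact ((F ^^ n) ` M \<inter> K n)" by (rule compact_Int_closed[OF K_compact cl])
    moreover have "(F ^^ n) ` M \<inter> K n = K n" unfolding K_def by blast
    ultimately show ?thesis by simp
  qed
  have Kne: "K n \<noteq> {}" for n
  proof -
    have "y \<in> (F ^^ Suc n) ` M" using y unfolding A_def by blast
    then obtain m where m: "m \<in> M" "y = (F ^^ Suc n) m" by blast
    then have "(F ^^ n) m \<in> K n" unfolding K_def by simp
    then show ?thesis by blast
  qed
  have Kn: "K n \<subseteq> K m" if "m \<le> n" for m n unfolding K_def using K_nest[OF that] by blast
  have "\<Inter> (range K) \<noteq> {}" by (rule compact_nest[OF Kc Kne Kn])
  then obtain z where z: "z \<in> \<Inter> (range K)" by blast
  then have zK: "z \<in> K n" for n by blast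
  have "z \<in> A" unfolding A_def using zK unfolding K_def by blast
  moreover have "F z = y" using zK[of 0] unfolding K_def by simp
  ultimately show ?thesis by blast
qed

lemma A_orbit: assumes x: "x \<in> A" shows "\<exists>xs\<in>orbits M F. xs 0 = x"
proof -
  define pre where "pre = (\<lambda>y. SOME z. z \<in> A \<and> F z = y)"
  have pre: "y \<in> A \<Longrightarrow> pre y \<in> A \<and> F (pre y) = y" for y
    unfolding pre_def using pre_ex[of y] by (metis (mono_tags, lifting) someI_ex)
  have preA: "(pre ^^ k) x \<in> A" for k by (induction k) (auto simp: x pre)
  define xs where "xs = (\<lambda>i::int. if 0 \<le> i then (F ^^ nat i) x else (pre ^^ nat (- i)) x)"
  have xM: "x \<in> M" using x A_sub by blast
  have "xs \<in> orbits M F"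
    unfolding orbits_def
  proof (intro CollectI conjI allI)
    fix n :: int
    show "xs n \<in> M" unfolding xs_def using FnM[OF xM] preA A_sub by auto
    show "F (xs n) = xs (n + 1)"
    proof (cases "0 \<le> n")
      case True
      then have "nat (n + 1) = Suc (nat n)" by simp
      then show ?thesis unfolding xs_def using True by simp
    next
      case False
      then have k: "nat (- n) = Suc (nat (- n - 1))" by simp
      have "F (xs n) = F (pre ((pre ^^ nat (- n - 1)) x))" unfolding xs_def using False k
        by (simp add: funpow_swap1)
      also have "\<dots> = (pre ^^ nat (- n - 1)) x" using pre preA by blast
      also have "\<dots> = xs (n + 1)"
      proof (cases "n = -1")
        case True then show ?thesis unfolding xs_def by simp
      next
        case False2: False
        then have nn: "\<not> 0 \<le> n + 1" using False by simp
        have "(pre ^^ nat (- n - 1)) x = (pre ^^ nat (- (n + 1))) x"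
          by (rule arg_cong[where f = "\<lambda>k. (pre ^^ k) x"]) simp
        also have "\<dots> = xs (n + 1)" unfolding xs_def using nn by simp
        finally show ?thesis .
      qed
      finally show ?thesis .
    qed
  qed
  moreover have "xs 0 = x" unfolding xs_def by simp
  ultimately show ?thesis by blast
qed

end

context setting
begin

definition full_at where
  "full_at x Es Ec Eu \<longleftrightarrow> est.full3 (tangent_space M x) (\<lambda>n v. PP F F' g n x v) C \<nu> \<gamma>1 \<gamma>2 \<mu> Es Ec Eu"

definition hdim where
  "hdim x = (SOME t. \<exists>Es Ec Eu. full_at x Es Ec Eu \<and> t = (dim Es, dim Ec, dim Eu))"

lemma uniq:
  assumes x: "x \<in> M" and f1: "full_at x Es Ec Eu" and f2: "full_at x Ls Lc Lu"
  shows "(dim Ls, dim Lc, dim Lu) = (dim Es, dim Ec, dim Eu)"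
proof -
  interpret e: est "tangent_space M x" "\<lambda>n v. PP F F' g n x v" C \<nu> \<gamma>1 \<gamma>2 \<mu> using est_at[OF x] .
  have g2: "e.good3 Ls Lc Lu" and d2: "dim Ls + dim Lc + dim Lu = dim (tangent_space M x)"
    using f2 unfolding full_at_def e.full3_def by auto
  have f1': "e.full3 Es Ec Eu" using f1 unfolding full_at_def .
  show ?thesis using e.dims_eq[OF f1' g2 d2] by simp
qed

lemma hd_eq:
  assumes x: "x \<in> M" and f: "full_at x Es Ec Eu"
  shows "hdim x = (dim Es, dim Ec, dim Eu)"
proof -
  have "\<exists>Es Ec Eu. full_at x Es Ec Eu \<and> hdim x = (dim Es, dim Ec, dim Eu)"
    unfolding hdim_def by (rule someI_ex) (use f in blast)
  then obtain Ls Lc Lu where "full_at x Ls Lc Lu" "hdim x = (dim Ls, dim Lc, dim Lu)" by blast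
  then show ?thesis using uniq[OF x f] by simp
qed

lemma lim_1k:
  fixes y :: "nat \<Rightarrow> 'a"
  assumes "\<And>k. dist (y k) x < 1 / real (Suc k)"
  shows "y \<longlonglongrightarrow> x"
proof (rule LIMSEQ_I)
  fix r :: real assume r: "0 < r"
  obtain N where N: "inverse (real (Suc N)) < r" using reals_Archimedean[OF r] by blast
  show "\<exists>N. \<forall>n\<ge>N. norm (y n - x) < r"
  proof (intro exI allI impI)
    fix n assume "N \<le> n"
    then have le: "inverse (real (Suc n)) \<le> inverse (real (Suc N))" by (intro le_imp_inverse_le) auto
    have "norm (y n - x) < inverse (real (Suc n))" using assms[of n] by (simp add: dist_norm divide_inverse)
    then show "norm (y n - x) < r" using le N by linarith
  qed
qed

lemma dims_bound: "dim (S::'a set) \<le> DIM('a)"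
proof -
  have "dim S \<le> dim (UNIV::'a set)" by (rule dim_subset) simp
  then show ?thesis by simp
qed

context
  assumes H: "\<forall>xs\<in>orbits M F. \<exists>Es Ec Eu. ph_splitting M F' g \<nu> \<gamma>1 \<gamma>2 \<mu> C xs Es Ec Eu"
begin

lemma exA: assumes x: "x \<in> A" shows "\<exists>Es Ec Eu. full_at x Es Ec Eu"
proof -
  obtain xs where xs: "xs \<in> orbits M F" "xs 0 = x" using A_orbit[OF x] by blast
  obtain Es Ec Eu where "ph_splitting M F' g \<nu> \<gamma>1 \<gamma>2 \<mu> C xs Es Ec Eu" using H xs(1) by blast
  then have "full_at x (Es 0) (Ec 0) (Eu 0)" using full_from_split[OF xs(1)] xs(2) unfolding full_at_def by blast
  then show ?thesis by blast
qed

lemma hd_bound: assumes x: "x \<in> A" shows "hdim x \<in> {..DIM('a)} \<times> {..DIM('a)} \<times> {..DIM('a)}"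
proof -
  obtain Es Ec Eu where f: "full_at x Es Ec Eu" using exA[OF x] by blast
  show ?thesis using hd_eq[OF _ f] x A_sub dims_bound by auto
qed

lemma loc_const: assumes x: "x \<in> A" shows "\<exists>e>0. \<forall>y\<in>A. dist y x < e \<longrightarrow> hdim y = hdim x"
proof (rule ccontr)
  assume "\<not> ?thesis"
  then have "\<forall>k. \<exists>y. y \<in> A \<and> dist y x < 1 / real (Suc k) \<and> hdim y \<noteq> hdim x"
    by (metis of_nat_0_less_iff zero_less_Suc zero_less_divide_1_iff)
  then obtain y where y: "\<And>k. y k \<in> A" "\<And>k. dist (y k) x < 1 / real (Suc k)" "\<And>k. hdim (y k) \<noteq> hdim x"
    by metis
  have fin: "finite ((\<lambda>k. hdim (y k)) ` UNIV)"
    by (rule finite_subset[of _ "{..DIM('a)} \<times> {..DIM('a)} \<times> {..DIM('a)}"]) (use hd_bound y(1) in blast, simp)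
  obtain a0 where a0: "infinite {k \<in> UNIV. hdim (y k) = hdim (y a0)}"
    using pigeonhole_infinite[OF infinite_UNIV_nat fin] by blast
  obtain r :: "nat \<Rightarrow> nat" where r: "strict_mono r" "\<forall>n. r n \<in> {k \<in> UNIV. hdim (y k) = hdim (y a0)}"
    using infinite_enumerate[OF a0] by blast
  define z where "z = (\<lambda>k. y (r k))"
  have zA: "z k \<in> A" for k unfolding z_def using y(1) .
  have zM: "z k \<in> M" for k using zA A_sub by blast
  have zl: "z \<longlonglongrightarrow> x" unfolding z_def
    using LIMSEQ_subseq_LIMSEQ[OF lim_1k[OF y(2)] r(1)] by (simp add: o_def)
  have hz: "hdim (z k) = hdim (y a0)" for k using r(2) unfolding z_def by simp
  have "\<forall>k. \<exists>T. full_at (z k) (fst T) (fst (snd T)) (snd (snd T))"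
    using exA[OF zA] by auto
  then obtain T where T: "\<And>k. full_at (z k) (fst (T k)) (fst (snd (T k))) (snd (snd (T k)))"
    by metis
  obtain a b c where abc: "hdim (y a0) = (a, b, c)" by (cases "hdim (y a0)") auto
  have dk: "dim (fst (T k)) = a" "dim (fst (snd (T k))) = b" "dim (snd (snd (T k))) = c" for k
    using hd_eq[OF zM T[of k]] hz[of k] abc by auto
  obtain Es0 Ec0 Eu0 where f0: "full_at x Es0 Ec0 Eu0" using exA[OF x] by blast
  have xM: "x \<in> M" using x A_sub by blast
  have "a = dim Es0 \<and> b = dim Ec0 \<and> c = dim Eu0"
    by (rule lim_dims[OF xM zM zl T[unfolded full_at_def] dk f0[unfolded full_at_def]])
  then have "hdim x = (a, b, c)" using hd_eq[OF xM f0] by simp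
  then show False using y(3)[of a0] abc by simp
qed

lemma hd_const: assumes "x \<in> A" "y \<in> A" shows "hdim x = hdim y"
proof -
  have lc: "\<exists>e>0. \<forall>z\<in>A. dist z w < e \<longrightarrow> f (hdim z) = f (hdim w)" if "w \<in> A" for w and f :: "nat \<times> nat \<times> nat \<Rightarrow> nat"
    using loc_const[OF that] by metis
  have 1: "fst (hdim x) = fst (hdim y)"
    using locconst_const[OF A_connected lc[where f = fst] assms] by simp
  have 2: "fst (snd (hdim x)) = fst (snd (hdim y))"
    using locconst_const[OF A_connected lc[where f = "\<lambda>t. fst (snd t)"] assms] by simp
  have 3: "snd (snd (hdim x)) = snd (snd (hdim y))"
    using locconst_const[OF A_connected lc[where f = "\<lambda>t. snd (snd t)"] assms] by simp
  show ?thesis using 1 2 3 by (simp add: prod_eq_iff)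
qed

lemma final: "\<exists>ds dc du. \<forall>xs\<in>orbits M F. \<forall>Es Ec Eu.
           ph_splitting M F' g \<nu> \<gamma>1 \<gamma>2 \<mu> C xs Es Ec Eu \<longrightarrow>
             dim (Es 0) = ds \<and> dim (Ec 0) = dc \<and> dim (Eu 0) = du"
proof -
  define x0 where "x0 = (SOME x. x \<in> A)"
  obtain ds dc du where t: "hdim x0 = (ds, dc, du)" by (cases "hdim x0") auto
  show ?thesis
  proof (intro exI ballI allI impI)
    fix xs Es Ec Eu assume xs: "xs \<in> orbits M F" and sp: "ph_splitting M F' g \<nu> \<gamma>1 \<gamma>2 \<mu> C xs Es Ec Eu"
    have A0: "xs 0 \<in> A" using orbit_in_A[OF xs] .
    then have "x0 \<in> A" unfolding x0_def by (rule someI)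
    have f: "full_at (xs 0) (Es 0) (Ec 0) (Eu 0)" using full_from_split[OF xs sp] unfolding full_at_def .
    have "hdim (xs 0) = (dim (Es 0), dim (Ec 0), dim (Eu 0))" using hd_eq[OF _ f] A0 A_sub by blast
    moreover have "hdim (xs 0) = hdim x0" using hd_const[OF A0 \<open>x0 \<in> A\<close>] .
    ultimately show "dim (Es 0) = ds \<and> dim (Ec 0) = dc \<and> dim (Eu 0) = du" using t by simp
  qed
qed

end

end

theorem mainTheorem13:
  fixes M :: "'a::euclidean_space set" and F :: "'a \<Rightarrow> 'a" and F' :: "'a \<Rightarrow> 'a \<Rightarrow>\<^sub>L 'a"
    and g :: "'a \<Rightarrow> 'a \<Rightarrow> 'a \<Rightarrow> real"
    and \<nu> \<gamma>\<^sub>1 \<gamma>\<^sub>2 \<mu> C :: real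
  assumes "closed_manifold M"
    and "C1_local_diffeo M F F'"
    and "riemannian_metric M g"
    and "0 < \<nu>" and "\<nu> < \<gamma>\<^sub>1" and "\<gamma>\<^sub>1 \<le> \<gamma>\<^sub>2" and "\<gamma>\<^sub>2 < \<mu>" and "\<nu> < 1" and "1 < \<mu>" and "C > 1"
    and "\<forall>xs\<in>orbits M F. \<exists>Es Ec Eu. ph_splitting M F' g \<nu> \<gamma>\<^sub>1 \<gamma>\<^sub>2 \<mu> C xs Es Ec Eu"
  shows "\<exists>ds dc du. \<forall>xs\<in>orbits M F. \<forall>Es Ec Eu.
           ph_splitting M F' g \<nu> \<gamma>\<^sub>1 \<gamma>\<^sub>2 \<mu> C xs Es Ec Eu \<longrightarrow>
             dim (Es 0) = ds \<and> dim (Ec 0) = dc \<and> dim (Eu 0) = du"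
proof -
  interpret s: setting M F F' g \<nu> "\<gamma>\<^sub>1" "\<gamma>\<^sub>2" \<mu> C
    by (rule setting.intro) (use assms in auto)
  show ?thesis using s.final assms(11) by blast
qed

end
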